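(* Let $q\in(0,\tfrac12)$ and let $T\sim U(1,2)$, $S\sim U(-1,0)$ be independent. Let $p_3^{PD}$ be the probability that the polynomial $$P_{T,S}(x)=(T+S-1)x^3+\big(1-T-2S+q(S-1-T)\big)x^2+\big(S+q(T-S)\big)x$$ has exactly three distinct roots in $[0,1]$. Then $$ p_3^{PD}=\begin{cases} \dfrac{1}{1-2q}\Big[-\dfrac{2\big(q^3+3q^2+(4\sqrt{1-2q}-6)q-2\sqrt{1-2q}+2\big)}{3q}-\dfrac{q^3}{2(1-q)}\Big], & 0< q\leq \frac{3-\sqrt{5}}{2},\\[3mm] \dfrac{-16 \left(\sqrt{1-2 q}-1\right) q^{3/2}+2 q^{5/2}+15 q^3+\left(8 \sqrt{1-2 q}-25\right) q^2+q-8 \sqrt{1-2 q}+2 \sqrt{q} \left(8 \sqrt{1-2 q}-5\right)+5}{6 \left(\sqrt{q}-1\right)^3 \left(q^{3/2}+q\right)}, & \frac{3-\sqrt{5}}{2}<q\leq \frac49,\\[3mm] \dfrac{(1-2q)^2}{2q(1-q)}, & \frac49<q<\frac12. \end{cases} $$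
   Context: This models the replicator–mutator dynamics of a two-player two-strategy Prisoner's Dilemma with payoff entries $a_{11}=1$, $a_{22}=0$, $a_{21}=T$, $a_{12}=S$ and symmetric mutation probability $q$; the equilibria of the dynamics are exactly the distinct roots in $[0,1]$ of $P_{T,S}$, and "the game has $k$ equilibria" means $P_{T,S}$ has exactly $k$ distinct roots in $[0,1]$. *)

theory Defs
  imports "HOL-Probability.Probability"
begin

definition P_TS :: "real \<Rightarrow> real \<Rightarrow> real \<Rightarrow> real \<Rightarrow> real" where
  "P_TS q T S x = (T + S - 1) * x ^ 3 + (1 - T - 2 * S + q * (S - 1 - T)) * x ^ 2
                  + (S + q * (T - S)) * x"

definition TS_dist :: "(real \<times> real) measure" where
  "TS_dist = uniform_measure lborel {1..2::real} \<Otimes>\<^sub>M uniform_measure lborel {-1..0::real}"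

definition p3_PD :: "real \<Rightarrow> real" where
  "p3_PD q = measure TS_dist {(T, S). card {x \<in> {0..1}. P_TS q T S x = 0} = 3}"

end

theory Submission
  imports Defs
begin


definition goodTS :: "real \<Rightarrow> real \<Rightarrow> real \<Rightarrow> bool" where
  "goodTS q T S \<longleftrightarrow> (let a = T + S - 1; b = 1 - T - 2*S + q*(S - 1 - T); c = S + q*(T - S)
     in a < 0 \<and> c < 0 \<and> 0 < b \<and> b < -2*a \<and> 0 < b^2 - 4*a*c)"

lemma quad_roots_forward:
  fixes a b c q x1 x2 :: real
  assumes q: "0 < q" and f1: "a + b + c = -q"
    and r1: "a*x1^2 + b*x1 + c = 0" and r2: "a*x2^2 + b*x2 + c = 0"
    and ne: "x1 \<noteq> x2" and x1: "0 < x1" "x1 < 1" and x2: "0 < x2" "x2 < 1"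
  shows "a < 0 \<and> c < 0 \<and> 0 < b \<and> b < -2*a \<and> 0 < b^2 - 4*a*c"
proof -
  have "(x1 - x2) * (a*(x1+x2) + b) = 0" using r1 r2 by (simp add: algebra_simps power2_eq_square)
  hence hb: "b = -a*(x1+x2)" using ne by simp
  have hc: "c = a*x1*x2" using r1 hb by (simp add: algebra_simps power2_eq_square)
  have "a*((1-x1)*(1-x2)) = -q" using f1 hb hc by (simp add: algebra_simps)
  moreover have "(1-x1)*(1-x2) > 0" using x1 x2 by simp
  ultimately have ha: "a < 0" using q by (smt (verit) mult_nonneg_nonneg)
  have p12: "x1*x2 > 0" using x1 x2 by simp
  have hc': "c < 0" unfolding hc using ha p12 by (simp add: mult.assoc mult_neg_pos)
  have "0 < b" unfolding hb using ha x1 x2 by (simp add: mult_neg_pos)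
  moreover have "b < -2*a"
  proof -
    have "(-a)*(x1+x2) < (-a)*2" using ha x1 x2 by (intro mult_strict_left_mono) auto
    thus ?thesis unfolding hb by simp
  qed
  moreover have "b^2 - 4*a*c = a^2*(x1-x2)^2" unfolding hb hc by (simp add: algebra_simps power2_eq_square)
  moreover have "a^2*(x1-x2)^2 > 0" using ha ne by simp
  ultimately show ?thesis using ha hc' by simp
qed

lemma quad_roots_backward:
  fixes a b c q :: real
  assumes q: "0 < q" and f1: "a + b + c = -q"
    and g: "a < 0" "c < 0" "0 < b" "b < -2*a" "0 < b^2 - 4*a*c"
  shows "card {x\<in>{0..1}. x * (a*x^2 + b*x + c) = 0} = 3"
proof -
  define D where "D = b^2 - 4*a*c"
  define r where "r = sqrt D"
  have D0: "D > 0" using g D_def by simp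
  have r0: "r > 0" and rr: "r^2 = D" using D0 by (auto simp: r_def)
  define x1 where "x1 = (-b + r)/(2*a)"
  define x2 where "x2 = (-b - r)/(2*a)"
  have fact: "a*x^2 + b*x + c = a*(x - x1)*(x - x2)" for x
  proof -
    have rr': "r*r = b*b - 4*a*c" using rr D_def by (simp add: power2_eq_square)
    have "4*a*(a*(x - x1)*(x - x2)) = (2*a*x + b - r)*(2*a*x + b + r)"
      unfolding x1_def x2_def using g(1) by (simp add: field_simps)
    also have "\<dots> = 4*a*(a*x^2 + b*x + c)" using rr' by (simp add: algebra_simps power2_eq_square)
    finally show ?thesis using g(1) by simp
  qed
  have "r < b"
  proof -
    have "r^2 < b^2" using rr D_def g by (smt (verit) mult_neg_neg)
    thus ?thesis using g(3) r0 by (smt (verit) power_mono)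
  qed
  hence x1p: "0 < x1" unfolding x1_def using g(1) by (intro divide_neg_neg) auto
  have "r < -b - 2*a"
  proof -
    have "(-b-2*a)^2 - r^2 = 4*a*(a+b+c)" using rr D_def by (simp add: algebra_simps power2_eq_square)
    also have "\<dots> > 0" using f1 g(1) q by (simp add: mult_neg_pos)
    finally have "r^2 < (-b-2*a)^2" by simp
    thus ?thesis using g r0 by (smt (verit) power_mono)
  qed
  hence x21: "x2 < 1" unfolding x2_def using g(1) by (simp add: field_simps)
  have x12: "x1 < x2" unfolding x1_def x2_def using g(1) r0 by (simp add: field_simps mult_neg_pos)
  have "{x\<in>{0..1}. x * (a*x^2 + b*x + c) = 0} = {0, x1, x2}"
    unfolding fact using x1p x21 x12 g(1) by auto
  moreover have "card {0, x1, x2} = 3" using x1p x12 by auto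
  ultimately show ?thesis by simp
qed

lemma P_TS_factor: "P_TS q T S x = x * ((T+S-1)*x^2 + (1 - T - 2*S + q*(S - 1 - T))*x + (S + q*(T-S)))"
  unfolding P_TS_def by (simp add: algebra_simps power2_eq_square power3_eq_cube)

lemma card_iff_good:
  assumes q: "0 < q" "q < 1/2"
  shows "card {x\<in>{0..1}. P_TS q T S x = 0} = 3 \<longleftrightarrow> goodTS q T S"
proof -
  define a where "a = T + S - 1"
  define b where "b = 1 - T - 2*S + q*(S - 1 - T)"
  define c where "c = S + q*(T - S)"
  have f1: "a + b + c = -q" unfolding a_def b_def c_def by (simp add: algebra_simps)
  have Z: "{x\<in>{0..1}. P_TS q T S x = 0} = {x\<in>{0..1}. x * (a*x^2 + b*x + c) = 0}"
    unfolding P_TS_factor a_def b_def c_def ..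
  have G: "goodTS q T S \<longleftrightarrow> a < 0 \<and> c < 0 \<and> 0 < b \<and> b < -2*a \<and> 0 < b^2 - 4*a*c"
    unfolding goodTS_def a_def b_def c_def Let_def ..
  show ?thesis
  proof
    assume "goodTS q T S"
    thus "card {x\<in>{0..1}. P_TS q T S x = 0} = 3" unfolding Z G
      using quad_roots_backward[OF q(1) f1] by blast
  next
    assume C: "card {x\<in>{0..1}. P_TS q T S x = 0} = 3"
    define Zs where "Zs = {x\<in>{0..1}. x * (a*x^2 + b*x + c) = 0}"
    have C': "card Zs = 3" using C Z Zs_def by simp
    hence fin: "finite Zs" by (metis card.infinite zero_neq_numeral)
    have "0 \<in> Zs" unfolding Zs_def by simp
    hence "card (Zs - {0}) = 2" using C' fin by simp
    then obtain x1 x2 where E: "Zs - {0} = {x1, x2}" and ne: "x1 \<noteq> x2" by (meson card_2_iff)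
    have one: "1 \<notin> Zs" unfolding Zs_def using f1 q by simp
    have "x1 \<in> Zs - {0}" "x2 \<in> Zs - {0}" using E by auto
    hence h1: "0 < x1" "x1 < 1" "a*x1^2 + b*x1 + c = 0" and h2: "0 < x2" "x2 < 1" "a*x2^2 + b*x2 + c = 0"
      using one unfolding Zs_def by (auto simp: less_le)
    show "goodTS q T S" unfolding G
      using quad_roots_forward[OF q(1) f1 h1(3) h2(3) ne h1(1,2) h2(1,2)] .
  qed
qed


definition rT :: "real \<Rightarrow> real \<Rightarrow> real" where
  "rT q T = (2 * sqrt((1-2*q)*T) - (1-q)*(T+1))/q"
definition hiT :: "real \<Rightarrow> real \<Rightarrow> real" where
  "hiT q T = min 0 (min (1-T) (min (-q*T/(1-q)) (min (((1-q) - T*(1+q))/(2-q)) ((1+q-T*(1-q))/q))))"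
definition Lsl :: "real \<Rightarrow> real \<Rightarrow> real" where
  "Lsl q T = max 0 (hiT q T - max (-1) (rT q T))"

lemma good_iff_slice:
  assumes q: "0 < q" "q < 1/2" and T: "1 \<le> T" and S: "-1 \<le> S"
  shows "goodTS q T S \<longleftrightarrow> S < 1-T \<and> S < -q*T/(1-q) \<and> S < ((1-q) - T*(1+q))/(2-q)
     \<and> S < (1+q-T*(1-q))/q \<and> rT q T < S"
proof -
  define w where "w = (1-q)*T + q*S + 1 - q"
  have w0: "w > 0"
  proof -
    have h1: "(1-q)*T \<ge> 1-q" using mult_left_mono[of 1 T "1-q"] T q by simp
    have h2: "q*S \<ge> -q" using mult_left_mono[of "-1" S q] S q by simp
    show ?thesis unfolding w_def using q h1 h2 by linarith
  qed
  have D: "(1 - T - 2*S + q*(S - 1 - T))^2 - 4*(T + S - 1)*(S + q*(T - S)) = w^2 - 4*((1-2*q)*T)"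
    unfolding w_def by (simp add: algebra_simps power2_eq_square)
  have Tp: "(1-2*q)*T \<ge> 0" using q T by simp
  have e1: "T + S - 1 < 0 \<longleftrightarrow> S < 1 - T" by auto
  have e2: "S + q*(T - S) < 0 \<longleftrightarrow> S < -q*T/(1-q)"
    using q by (simp add: field_simps; (simp add: algebra_simps)?)
  have e3: "0 < 1 - T - 2*S + q*(S - 1 - T) \<longleftrightarrow> S < ((1-q) - T*(1+q))/(2-q)"
    using q by (simp add: field_simps; (simp add: algebra_simps)?)
  have e4: "1 - T - 2*S + q*(S - 1 - T) < -2*(T + S - 1) \<longleftrightarrow> S < (1+q-T*(1-q))/q"
    using q by (simp add: field_simps; (simp add: algebra_simps)?)
  have e5: "0 < w^2 - 4*((1-2*q)*T) \<longleftrightarrow> rT q T < S"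
  proof -
    have "0 < w^2 - 4*((1-2*q)*T) \<longleftrightarrow> (2 * sqrt((1-2*q)*T))^2 < w^2"
      using Tp by (simp add: power_mult_distrib)
    also have "\<dots> \<longleftrightarrow> 2 * sqrt((1-2*q)*T) < w"
    proof
      have n: "0 \<le> 2 * sqrt((1-2*q)*T)" using Tp by simp
      { assume h: "(2 * sqrt((1-2*q)*T))^2 < w^2"
        show "2 * sqrt((1-2*q)*T) < w" using power2_less_imp_less[OF h] w0 by simp }
      { assume h: "2 * sqrt((1-2*q)*T) < w"
        show "(2 * sqrt((1-2*q)*T))^2 < w^2" using power_strict_mono[OF h n, of 2] by simp }
    qed
    also have "\<dots> \<longleftrightarrow> rT q T < S" unfolding rT_def w_def using q by (simp add: field_simps)
    finally show ?thesis .
  qed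
  show ?thesis unfolding goodTS_def Let_def D e1 e2 e3 e4 e5 by blast
qed

lemma good_pred: "Measurable.pred (borel \<Otimes>\<^sub>M borel) (\<lambda>p::real\<times>real. goodTS q (fst p) (snd p))"
  unfolding goodTS_def Let_def by measurable

lemma good_pred1: "Measurable.pred borel (\<lambda>S::real. goodTS q T S)"
  unfolding goodTS_def Let_def by measurable

lemma Lsl_meas: "(\<lambda>T. ennreal (Lsl q T)) \<in> borel_measurable borel"
  unfolding Lsl_def hiT_def rT_def by measurable

lemma slice_measure:
  assumes q: "0 < q" "q < 1/2" and T: "1 \<le> T"
  shows "emeasure lborel ({-1..0} \<inter> {S. goodTS q T S}) = ennreal (Lsl q T)"
proof -
  define E where "E = {-1..0} \<inter> {S. goodTS q T S}"
  define lo where "lo = max (-1) (rT q T)"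
  define hi where "hi = hiT q T"
  have Em: "E \<in> sets lborel" unfolding E_def using good_pred1[of q T] by (simp add: pred_def)
  have sub1: "E \<subseteq> {lo..hi}"
  proof
    fix S assume "S \<in> E"
    hence S: "-1 \<le> S" "S \<le> 0" "goodTS q T S" unfolding E_def by auto
    show "S \<in> {lo..hi}" using S(3) unfolding good_iff_slice[OF q T S(1)] lo_def hi_def hiT_def
      using S by auto
  qed
  have sub2: "{lo<..<hi} \<subseteq> E"
  proof
    fix S assume "S \<in> {lo<..<hi}"
    hence S: "lo < S" "S < hi" by auto
    hence S1: "-1 \<le> S" unfolding lo_def by simp
    have "goodTS q T S" unfolding good_iff_slice[OF q T S1] using S unfolding lo_def hi_def hiT_def
      by auto
    moreover have "S \<le> 0" using S unfolding hi_def hiT_def by auto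
    ultimately show "S \<in> E" unfolding E_def using S1 by auto
  qed
  show ?thesis
  proof (cases "lo \<le> hi")
    case True
    have "emeasure lborel E \<le> ennreal (hi - lo)"
      using emeasure_mono[OF sub1, of lborel] True by simp
    moreover have "ennreal (hi - lo) \<le> emeasure lborel E"
      using emeasure_mono[OF sub2 Em] True by simp
    ultimately have "emeasure lborel E = ennreal (hi - lo)" by (rule antisym)
    moreover have "Lsl q T = hi - lo" unfolding Lsl_def lo_def hi_def using True lo_def hi_def by simp
    ultimately show ?thesis unfolding E_def by simp
  next
    case False
    hence "E = {}" using sub1 by auto
    moreover have "Lsl q T = 0" unfolding Lsl_def using False unfolding lo_def hi_def by linarith
    ultimately show ?thesis unfolding E_def by simp
  qed
qed

lemma ennreal_div_one: "(x::ennreal) / 1 = x" by (simp add: divide_ennreal_def)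

lemma p3_integral:
  assumes q: "0 < q" "q < 1/2" and I: "(Lsl q has_integral I) {1..2}"
  shows "p3_PD q = I"
proof -
  define U1 where "U1 = uniform_measure lborel {1..2::real}"
  define U2 where "U2 = uniform_measure lborel {-1..0::real}"
  define X where "X = {(T, S). card {x \<in> {0..1}. P_TS q T S x = 0} = 3}"
  have X: "X = {p. goodTS q (fst p) (snd p)}" unfolding X_def using card_iff_good[OF q] by auto
  have "prob_space U2" unfolding U2_def by (intro prob_space_uniform_measure) auto
  hence sf: "sigma_finite_measure U2" by (rule prob_space_imp_sigma_finite)
  have Xm: "X \<in> sets (U1 \<Otimes>\<^sub>M U2)"
  proof -
    have "sets (U1 \<Otimes>\<^sub>M U2) = sets (borel \<Otimes>\<^sub>M borel)" unfolding U1_def U2_def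
      by (intro sets_pair_measure_cong) auto
    moreover have "X \<in> sets (borel \<Otimes>\<^sub>M borel)" unfolding X using good_pred[of q]
      by (simp add: pred_def space_pair_measure)
    ultimately show ?thesis by simp
  qed
  have "emeasure TS_dist X = (\<integral>\<^sup>+T. emeasure U2 (Pair T -` X) \<partial>U1)"
    unfolding TS_dist_def U1_def[symmetric] U2_def[symmetric]
    using sigma_finite_measure.emeasure_pair_measure_alt[OF sf Xm] .
  also have "\<dots> = (\<integral>\<^sup>+T. ennreal (Lsl q T) \<partial>U1)"
  proof (rule nn_integral_cong_AE)
    show "AE T in U1. emeasure U2 (Pair T -` X) = ennreal (Lsl q T)"
      unfolding U1_def
    proof (rule AE_uniform_measureI)
      show "{1..2::real} \<in> sets lborel" by simp
      show "AE T in lborel. T \<in> {1..2} \<longrightarrow> emeasure U2 (Pair T -` X) = ennreal (Lsl q T)"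
      proof (rule AE_I2, rule impI)
        fix T :: real assume T: "T \<in> {1..2}"
        have P: "Pair T -` X = {S. goodTS q T S}" unfolding X by auto
        have Pm0: "{x \<in> space borel. goodTS q T x} \<in> sets borel" using good_pred1[of q T] unfolding pred_def .
        have eqP: "{S. goodTS q T S} = {x \<in> space borel. goodTS q T x}" by simp
        have Pm: "{S. goodTS q T S} \<in> sets lborel" unfolding eqP sets_lborel by (rule Pm0)
        have "emeasure U2 (Pair T -` X) = emeasure lborel ({-1..0} \<inter> {S. goodTS q T S}) / emeasure lborel {-1..0::real}"
          unfolding U2_def P by (rule emeasure_uniform_measure) (use Pm in auto)
        also have "\<dots> = ennreal (Lsl q T)" using slice_measure[OF q, of T] T by (simp add: ennreal_div_one)
        finally show "emeasure U2 (Pair T -` X) = ennreal (Lsl q T)" .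
      qed
    qed
  qed
  also have "\<dots> = (\<integral>\<^sup>+T. ennreal (Lsl q T) * indicator {1..2} T \<partial>lborel) / emeasure lborel {1..2::real}"
    unfolding U1_def by (rule nn_integral_uniform_measure) (auto simp: Lsl_meas)
  also have "\<dots> = ennreal I"
    using nn_integral_has_integral_lebesgue'[OF _ I] by (simp add: Lsl_def ennreal_div_one)
  finally have E: "emeasure TS_dist X = ennreal I" .
  have "I \<ge> 0" using has_integral_nonneg[OF I] by (simp add: Lsl_def)
  thus ?thesis unfolding p3_PD_def X_def[symmetric] measure_def E by simp
qed


lemma frac_le_iff:
  fixes a b c d :: real assumes "0 < c" "0 < d"
  shows "a/c \<le> b/d \<longleftrightarrow> a*d \<le> b*c"
  using assms by (simp add: field_simps)

lemma frac_less_iff: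
  fixes a b c d :: real assumes "0 < c" "0 < d"
  shows "a/c < b/d \<longleftrightarrow> a*d < b*c"
  using frac_le_iff[OF assms, of b a] frac_le_iff[OF assms(2,1), of b a] assms
  by (smt (verit) frac_le_iff)

context
  fixes q ws xq :: real
  assumes q0: "0 < q" and q1: "q < 1/2" and ws_def: "ws = sqrt(1-2*q)" and xq_def: "xq = sqrt q"
begin

lemma s_props: "0 < ws" "ws < 1" "ws^2 = 1-2*q"
proof -
  show "0 < ws" unfolding ws_def using q1 by simp
  show "ws < 1" unfolding ws_def using q0 q1 by simp
  show "ws^2 = 1-2*q" unfolding ws_def using q1 by simp
qed

lemma x_props: "0 < xq" "xq < 1" "xq^2 = q"
  using q0 q1 unfolding xq_def by auto

lemma rT_t: "0 \<le> T \<Longrightarrow> rT q T = (2*ws* sqrt T - (1-q)*(T+1))/q"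
  unfolding rT_def ws_def using q1 by (simp add: real_sqrt_mult)

lemma hi_u2:
  assumes T: "0 \<le> T" and h0: "(1-2*q)*T \<le> (1-q)^2"
  shows "hiT q T = -q*T/(1-q)"
proof -
  have a1: "-q*T/(1-q) \<le> 0" using q0 q1 T by (simp add: divide_nonpos_pos mult_nonneg_nonneg)
  have "(1-q)^2 \<le> 1-q" using q0 q1 by (simp add: power2_eq_square mult_le_cancel_right1)
  hence "(1-2*q)*T \<le> 1-q" using h0 by linarith
  hence "-q*T \<le> (1-T)*(1-q)" by (simp add: algebra_simps)
  hence a2: "-q*T/(1-q) \<le> 1-T" using q1 by (subst pos_divide_le_eq) auto
  have "(1-2*q)*T \<le> (1-q)*(1-q)" using h0 by (simp add: power2_eq_square)
  moreover have "(-q*T)*(2-q) - ((1-q) - T*(1+q))*(1-q) = (1-2*q)*T - (1-q)*(1-q)"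
    by (simp add: algebra_simps)
  ultimately have a3: "-q*T/(1-q) \<le> ((1-q) - T*(1+q))/(2-q)" using q0 q1
    by (subst frac_le_iff) auto
  have "(1-q)^2 \<le> 1 - q^2" using q0 q1 by (simp add: power2_eq_square algebra_simps)
  hence "(1-2*q)*T \<le> (1-q)*(1+q)" using h0 by (simp add: algebra_simps power2_eq_square)
  moreover have "(-q*T)*q - (1+q-T*(1-q))*(1-q) = (1-2*q)*T - (1-q)*(1+q)"
    by (simp add: algebra_simps)
  ultimately have a4: "-q*T/(1-q) \<le> (1+q-T*(1-q))/q" using q0 q1
    by (subst frac_le_iff) auto
  show ?thesis unfolding hiT_def using a1 a2 a3 a4 by linarith
qed

lemma xq_ge_q: "q \<le> xq"
proof -
  have "q = xq*xq" using x_props by (simp add: power2_eq_square)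
  also have "\<dots> \<le> xq*1" using x_props by (intro mult_left_mono) auto
  finally show ?thesis by simp
qed

lemma rT_tt: "0 \<le> t \<Longrightarrow> rT q (t^2) = (2*ws*t - (1-q)*(t^2+1))/q"
  using rT_t[of "t^2"] by simp

lemma id_u2r:
  assumes t: "0 \<le> t"
  shows "-q*t^2/(1-q) - rT q (t^2) = (ws * t - (1-q))^2/(q*(1-q))"
proof -
  have w2: "ws^2 = 1-2*q" using s_props by simp
  show ?thesis unfolding rT_tt[OF t] using q0 q1
    apply (simp add: field_simps)
    using w2 by algebra
qed

lemma id_ru3:
  assumes t: "0 \<le> t"
  shows "rT q (t^2) - ((1-q) - t^2*(1+q))/(2-q) = -2*(ws * t - 1)*(ws * t - (1-q))/(q*(2-q))"
proof -
  have w2: "ws^2 = 1-2*q" using s_props by simp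
  show ?thesis unfolding rT_tt[OF t] using q0 q1
    apply (simp add: field_simps)
    using w2 by algebra
qed

lemma id_ru4:
  assumes t: "0 \<le> t"
  shows "rT q (t^2) - (1+q-t^2*(1-q))/q = 2*(ws * t - 1)/q"
  unfolding rT_tt[OF t] using q0 q1 by (simp add: field_simps)

lemma id_r1:
  assumes t: "0 \<le> t"
  shows "(rT q (t^2) + 1) * (q * (1-q)) = -(((1-q)*t - ws*(1-xq)) * ((1-q)*t - ws*(1+xq)))"
proof -
  have w2: "ws^2 = 1-2*q" using s_props by simp
  have x2: "xq^2 = q" using x_props by simp
  show ?thesis unfolding rT_tt[OF t] using q0 q1
    apply (simp add: field_simps)
    using w2 x2 by algebra
qed

lemma r_ge:
  assumes t: "1 \<le> t" and B: "(1-q)*t \<le> ws*(1+xq)"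
  shows "-1 \<le> rT q (t^2)"
proof -
  have "ws*(1-xq) \<le> 1*(1-xq)" using s_props x_props by (intro mult_right_mono) auto
  hence A1: "ws*(1-xq) \<le> 1-xq" by simp
  have "(1-q)*1 \<le> (1-q)*t" using t q1 by (intro mult_left_mono) auto
  hence A2: "1-q \<le> (1-q)*t" by simp
  from A1 A2 have A: "0 \<le> (1-q)*t - ws*(1-xq)" using xq_ge_q by linarith
  have "((1-q)*t - ws*(1-xq)) * ((1-q)*t - ws*(1+xq)) \<le> 0"
    using A B by (simp add: mult_nonneg_nonpos)
  hence "(rT q (t^2) + 1) * (q * (1-q)) \<ge> 0" using id_r1 t by simp
  moreover have "q*(1-q) > 0" using q0 q1 by simp
  ultimately have "rT q (t^2) + 1 \<ge> 0" by (simp add: zero_le_mult_iff)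
  thus ?thesis by simp
qed

lemma r_le:
  assumes t: "1 \<le> t" and B: "ws*(1+xq) \<le> (1-q)*t"
  shows "rT q (t^2) \<le> -1"
proof -
  have "ws*(1-xq) \<le> 1*(1-xq)" using s_props x_props by (intro mult_right_mono) auto
  hence A1: "ws*(1-xq) \<le> 1-xq" by simp
  have "(1-q)*1 \<le> (1-q)*t" using t q1 by (intro mult_left_mono) auto
  hence A2: "1-q \<le> (1-q)*t" by simp
  from A1 A2 have A: "0 \<le> (1-q)*t - ws*(1-xq)" using xq_ge_q by linarith
  have "((1-q)*t - ws*(1-xq)) * ((1-q)*t - ws*(1+xq)) \<ge> 0"
    using A B by simp
  hence "(rT q (t^2) + 1) * (q * (1-q)) \<le> 0" using id_r1 t by simp
  moreover have "q*(1-q) > 0" using q0 q1 by simp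
  ultimately have "rT q (t^2) + 1 \<le> 0" by (metis mult_le_cancel_right_pos mult_zero_left)
  thus ?thesis by simp
qed

lemma h0_of:
  assumes t: "0 \<le> t" and w: "ws*t \<le> 1-q"
  shows "(1-2*q)*t^2 \<le> (1-q)^2"
proof -
  have "(ws*t)^2 \<le> (1-q)^2" using w t s_props by (intro power_mono) auto
  thus ?thesis using s_props by (simp add: power_mult_distrib)
qed

lemma La:
  assumes t: "1 \<le> t" and w: "ws*t \<le> 1-q" and B: "(1-q)*t \<le> ws*(1+xq)"
  shows "Lsl q (t^2) = -q*t^2/(1-q) - rT q (t^2)"
proof -
  have hi: "hiT q (t^2) = -q*t^2/(1-q)" using hi_u2 h0_of w t by simp
  have r: "-1 \<le> rT q (t^2)" using r_ge t B by simp
  have "0 \<le> (ws * t - (1-q))^2/(q*(1-q))" using q0 q1 by simp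
  hence d: "0 \<le> -q*t^2/(1-q) - rT q (t^2)" using id_u2r t by simp
  show ?thesis unfolding Lsl_def hi using r d by simp
qed

lemma Lb:
  assumes t: "1 \<le> t" and w: "ws*t \<le> 1-q" and B: "ws*(1+xq) \<le> (1-q)*t" and e: "q*t^2 \<le> 1-q"
  shows "Lsl q (t^2) = -q*t^2/(1-q) + 1"
proof -
  have hi: "hiT q (t^2) = -q*t^2/(1-q)" using hi_u2 h0_of w t by simp
  have r: "rT q (t^2) \<le> -1" using r_le t B by simp
  have "-q*t^2/(1-q) \<ge> -1" using e q1 by (simp add: le_divide_eq)
  thus ?thesis unfolding Lsl_def hi using r by simp
qed

lemma Lc:
  assumes e: "1-q \<le> q*t^2"
  shows "Lsl q (t^2) = 0"
proof -
  have "hiT q (t^2) \<le> -q*t^2/(1-q)" unfolding hiT_def by simp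
  moreover have "-q*t^2/(1-q) \<le> -1" using e q1 by (simp add: divide_le_eq)
  ultimately show ?thesis unfolding Lsl_def by simp
qed

lemma Ld:
  assumes t: "0 \<le> t" and w: "1-q \<le> ws*t"
  shows "Lsl q (t^2) = 0"
proof (cases "ws*t \<le> 1")
  case True
  have "0 \<le> -2*(ws * t - 1)*(ws * t - (1-q))"
    using True w by (simp add: mult_nonpos_nonneg mult_nonneg_nonpos)
  hence "0 \<le> -2*(ws * t - 1)*(ws * t - (1-q))/(q*(2-q))" using q0 q1 by simp
  hence "((1-q) - t^2*(1+q))/(2-q) \<le> rT q (t^2)" using id_ru3[OF t] by simp
  moreover have "hiT q (t^2) \<le> ((1-q) - t^2*(1+q))/(2-q)" unfolding hiT_def by simp
  ultimately show ?thesis unfolding Lsl_def by simp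
next
  case False
  have "0 \<le> 2*(ws * t - 1)/q" using False q0 by simp
  hence "(1+q-t^2*(1-q))/q \<le> rT q (t^2)" using id_ru4[OF t] by simp
  moreover have "hiT q (t^2) \<le> (1+q-t^2*(1-q))/q" unfolding hiT_def by simp
  ultimately show ?thesis unfolding Lsl_def by simp
qed

end


definition Gf :: "real \<Rightarrow> real \<Rightarrow> real \<Rightarrow> real" where
  "Gf q w T = - (q/(1-q)) * (T^2/2) - (2*w/q) * ((2/3) * (T * sqrt T)) + ((1-q)/q) * ((T+1)^2/2)"
definition Hf :: "real \<Rightarrow> real \<Rightarrow> real" where
  "Hf q T = T - (q/(1-q)) * (T^2/2)"

lemma dA: "((\<lambda>T::real. T^2/2) has_real_derivative T) (at T)"
  by (auto intro!: derivative_eq_intros)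

lemma dB: assumes T: "0 < (T::real)" shows "((\<lambda>T. (2/3)*(T * sqrt T)) has_real_derivative sqrt T) (at T)"
proof -
  have i: "T * inverse (sqrt T) = sqrt T" using T by (metis divide_inverse real_div_sqrt less_imp_le)
  show ?thesis using T i by (auto intro!: derivative_eq_intros simp: field_simps)
qed

lemma dC: "((\<lambda>T::real. (T+1)^2/2) has_real_derivative T+1) (at T)"
  by (auto intro!: derivative_eq_intros)

lemma sqrt_le_of: "0 \<le> c \<Longrightarrow> T \<le> c^2 \<Longrightarrow> sqrt T \<le> (c::real)"
  using real_sqrt_le_mono[of T "c^2"] by simp

lemma sqrt_ge_of: "0 \<le> c \<Longrightarrow> c^2 \<le> T \<Longrightarrow> (c::real) \<le> sqrt T"
  using real_sqrt_le_mono[of "c^2" T] by simp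

context
  fixes q ws xq :: real
  assumes q0: "0 < q" and q1: "q < 1/2" and ws_def: "ws = sqrt(1-2*q)" and xq_def: "xq = sqrt q"
begin

lemmas La' = La[OF q0 q1 ws_def xq_def]
lemmas Lb' = Lb[OF q0 q1 ws_def xq_def]
lemmas Lc' = Lc[OF q0 q1 ws_def xq_def]
lemmas Ld' = Ld[OF q0 q1 ws_def xq_def]
lemmas rT_t' = rT_t[OF q0 q1 ws_def xq_def]
lemmas s_props' = s_props[OF q0 q1 ws_def xq_def]
lemmas x_props' = x_props[OF q0 q1 ws_def xq_def]

lemma G_deriv:
  assumes T: "0 < T"
  shows "(Gf q ws has_real_derivative (-q*T/(1-q) - rT q T)) (at T)"
proof -
  have e: "-q*T/(1-q) - rT q T = -q*T/(1-q) - 2*ws* sqrt T/q + (1-q)*(T+1)/q"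
  proof -
    have r: "rT q T = (2*ws * sqrt T - (1-q)*(T+1))/q" using rT_t'[of T] T by simp
    show ?thesis unfolding r using T q0 by (simp add: field_simps)
  qed
  have "(Gf q ws has_real_derivative (- (q/(1-q)) * T - (2*ws/q) * sqrt T + ((1-q)/q) * (T+1))) (at T)"
    unfolding Gf_def by (intro DERIV_add DERIV_diff DERIV_cmult dA dB dC T)
  moreover have "- (q/(1-q)) * T - (2*ws/q) * sqrt T + ((1-q)/q) * (T+1) = -q*T/(1-q) - 2*ws * sqrt T/q + (1-q)*(T+1)/q"
    by simp
  ultimately have "(Gf q ws has_real_derivative (-q*T/(1-q) - 2*ws* sqrt T/q + (1-q)*(T+1)/q)) (at T)" by simp
  thus ?thesis unfolding e .
qed

lemma G_integral:
  assumes ab: "0 < a" "a \<le> b"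
  shows "((\<lambda>T. -q*T/(1-q) - rT q T) has_integral (Gf q ws b - Gf q ws a)) {a..b}"
proof (rule fundamental_theorem_of_calculus[OF ab(2)])
  fix T assume "T \<in> {a..b}"
  hence "0 < T" using ab by auto
  thus "(Gf q ws has_vector_derivative (-q*T/(1-q) - rT q T)) (at T within {a..b})"
    using G_deriv has_real_derivative_iff_has_vector_derivative has_vector_derivative_at_within by blast
qed

lemma H_integral:
  assumes ab: "a \<le> b"
  shows "((\<lambda>T. -q*T/(1-q) + 1) has_integral (Hf q b - Hf q a)) {a..b}"
proof (rule fundamental_theorem_of_calculus[OF ab])
  fix T assume "T \<in> {a..b}"
  have "(Hf q has_real_derivative (1 - (q/(1-q)) * T)) (at T)"
    unfolding Hf_def by (intro DERIV_diff DERIV_cmult dA DERIV_ident)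
  moreover have "1 - (q/(1-q)) * T = -q*T/(1-q) + 1" by simp
  ultimately show "(Hf q has_vector_derivative (-q*T/(1-q) + 1)) (at T within {a..b})"
    using has_real_derivative_iff_has_vector_derivative has_vector_derivative_at_within by metis
qed

definition "Ts = ((1-q)/ws)^2"
definition "T2 = (ws*(1+xq)/(1-q))^2"
definition "Te = (1-q)/q"

lemma Pa:
  assumes ab: "1 \<le> a" "a \<le> b" and b: "b \<le> Ts" "b \<le> T2"
  shows "(Lsl q has_integral (Gf q ws b - Gf q ws a)) {a..b}"
proof (rule has_integral_eq[OF _ G_integral])
  fix T assume T: "T \<in> {a..b}"
  define t where "t = sqrt T"
  have T1: "1 \<le> T" using T ab by auto
  have TT: "T = t^2" unfolding t_def using T1 by simp
  have t1: "1 \<le> t" unfolding t_def using T1 by simp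
  have "t \<le> (1-q)/ws" unfolding t_def using T b q1 s_props' by (intro sqrt_le_of) (auto simp: Ts_def)
  hence w: "ws*t \<le> 1-q" using s_props' by (simp add: le_divide_eq mult.commute)
  have "t \<le> ws*(1+xq)/(1-q)" unfolding t_def using T b q1 s_props' x_props'
    by (intro sqrt_le_of) (auto simp: T2_def)
  hence B: "(1-q)*t \<le> ws*(1+xq)" using q1 by (simp add: le_divide_eq mult.commute)
  show "-q*T/(1-q) - rT q T = Lsl q T" using La'[OF t1 w B] unfolding TT by simp
qed (use ab in auto)

lemma Pb:
  assumes ab: "1 \<le> a" "a \<le> b" and a: "T2 \<le> a" and b: "b \<le> Ts" "b \<le> Te"
  shows "(Lsl q has_integral (Hf q b - Hf q a)) {a..b}"
proof (rule has_integral_eq[OF _ H_integral])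
  fix T assume T: "T \<in> {a..b}"
  define t where "t = sqrt T"
  have T1: "1 \<le> T" using T ab by auto
  have TT: "T = t^2" unfolding t_def using T1 by simp
  have t1: "1 \<le> t" unfolding t_def using T1 by simp
  have "t \<le> (1-q)/ws" unfolding t_def using T b q1 s_props' by (intro sqrt_le_of) (auto simp: Ts_def)
  hence w: "ws*t \<le> 1-q" using s_props' by (simp add: le_divide_eq mult.commute)
  have "ws*(1+xq)/(1-q) \<le> t" unfolding t_def using T a q1 s_props' x_props'
    by (intro sqrt_ge_of) (auto simp: T2_def)
  hence B: "ws*(1+xq) \<le> (1-q)*t" using q1 by (simp add: divide_le_eq mult.commute)
  have "T \<le> (1-q)/q" using T b by (auto simp: Te_def)
  hence e: "q*t^2 \<le> 1-q" using q0 unfolding TT by (simp add: le_divide_eq mult.commute)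
  show "-q*T/(1-q) + 1 = Lsl q T" using Lb'[OF t1 w B e] unfolding TT by simp
qed (use ab in auto)

lemma P0:
  assumes ab: "1 \<le> a" and a: "Te \<le> a \<or> Ts \<le> a"
  shows "(Lsl q has_integral 0) {a..b}"
proof (rule has_integral_eq[OF _ has_integral_0])
  fix T assume T: "T \<in> {a..b}"
  define t where "t = sqrt T"
  have T1: "1 \<le> T" using T ab by auto
  have TT: "T = t^2" unfolding t_def using T1 by simp
  have t0: "0 \<le> t" unfolding t_def using T1 by simp
  show "0 = Lsl q T"
  proof (cases "Te \<le> a")
    case True
    hence "(1-q)/q \<le> T" using T by (auto simp: Te_def)
    hence "1-q \<le> q*t^2" using q0 unfolding TT by (simp add: divide_le_eq mult.commute)
    thus ?thesis using Lc' unfolding TT by simp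
  next
    case False
    hence "Ts \<le> T" using a T by auto
    hence "(1-q)/ws \<le> t" unfolding t_def using q1 s_props' by (intro sqrt_ge_of) (auto simp: Ts_def)
    hence "1-q \<le> ws*t" using s_props' by (simp add: divide_le_eq mult.commute)
    thus ?thesis using Ld'[OF t0] unfolding TT by simp
  qed
qed

end


context
  fixes q ws xq :: real
  assumes q0: "0 < q" and q1: "q < 1/2" and ws_def: "ws = sqrt(1-2*q)" and xq_def: "xq = sqrt q"
begin

lemmas s_props'' = s_props[OF q0 q1 ws_def xq_def]
lemmas x_props'' = x_props[OF q0 q1 ws_def xq_def]

lemma val1:
  "Gf q ws (((1-q)/ws)^2) - Gf q ws 1 =
     (1 / (1 - 2*q)) *
         ( - (2 * (q^3 + 3*q^2 + (4 * ws - 6) * q - 2 * ws + 2)) / (3*q)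
           - q^3 / (2 * (1 - q)))"
proof -
  have w2: "ws^2 = 1-2*q" and wp: "ws > 0" using s_props'' by auto
  define p where "p = 1 - q"
  have pp: "p > 0" "p + q = 1" unfolding p_def using q1 by auto
  have sq: "sqrt ((p/ws)^2) = p/ws" using wp pp by simp
  have e: "1 - 2*q = ws^2" using w2 by simp
  show ?thesis unfolding Gf_def e p_def[symmetric] sq using q0 wp pp
    apply (simp add: field_simps)
    using w2 pp(2) by algebra
qed

lemma val3:
  "Hf q ((1-q)/q) - Hf q 1 = (1 - 2*q)^2 / (2 * q * (1 - q))"
proof -
  define p where "p = 1 - q"
  have pp: "p > 0" "p + q = 1" unfolding p_def using q1 by auto
  show ?thesis unfolding Hf_def p_def[symmetric] using q0 pp
    apply (simp add: field_simps)
    using pp(2) by algebra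
qed

lemma val2_core:
  assumes m: "m = 1 - xq" and a: "a = 1 + xq"
  shows "(Gf (xq^2) ws ((ws/m)^2) - Gf (xq^2) ws 1) + (Hf (xq^2) ((m*a)/xq^2) - Hf (xq^2) ((ws/m)^2)) =
       (-16 * (ws - 1) * (xq^2 * xq) + 2 * ((xq^2)^2 * xq) + 15 * (xq^2)^3
         + (8 * ws - 25) * (xq^2)^2 + xq^2 - 8 * ws
         + 2 * xq * (8 * ws - 5) + 5)
       / (6 * (-m)^3 * (xq^2 * a))"
proof -
  have w2: "ws^2 = 1-2*xq^2" and wp: "ws > 0" using s_props'' x_props'' by auto
  have xp: "xq > 0" "xq < 1" using x_props'' by auto
  have mp: "m > 0" using m xp by simp
  have ap: "a > 0" using a xp by simp
  have ma: "1 - xq^2 = m*a" unfolding m a by (simp add: algebra_simps power2_eq_square)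
  have sq: "sqrt ((ws/m)^2) = ws/m" using wp mp by simp
  show ?thesis unfolding Gf_def Hf_def ma sq
    using xp wp mp ap
    apply (simp add: field_simps)
    using w2 m a by algebra
qed

lemma val2:
  "(Gf q ws ((ws*(1+xq)/(1-q))^2) - Gf q ws 1) + (Hf q ((1-q)/q) - Hf q ((ws*(1+xq)/(1-q))^2)) =
       (-16 * (ws - 1) * (q * xq) + 2 * (q^2 * xq) + 15 * q^3
         + (8 * ws - 25) * q^2 + q - 8 * ws
         + 2 * xq * (8 * ws - 5) + 5)
       / (6 * (xq - 1)^3 * (q * xq + q))"
proof -
  have xp: "xq > 0" "xq < 1" "xq^2 = q" using x_props'' by auto
  have e1: "ws*(1+xq)/(1-q) = ws/(1-xq)"
  proof -
    have "1 - q = (1-xq)*(1+xq)" using xp by (simp add: algebra_simps power2_eq_square)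
    thus ?thesis using xp by simp
  qed
  have e2: "(1-q)/q = ((1-xq)*(1+xq))/xq^2" using xp by (simp add: algebra_simps power2_eq_square)
  have e3: "xq - 1 = -(1-xq)" by simp
  have e4: "q * xq + q = xq^2 * (1+xq)" using xp by (simp add: algebra_simps)
  show ?thesis unfolding e1 e2 e3 e4 unfolding xp(3)[symmetric]
    using val2_core[OF refl refl] .
qed

end


context
  fixes q ws xq :: real
  assumes q0: "0 < q" and q1: "q < 1/2" and ws_def: "ws = sqrt(1-2*q)" and xq_def: "xq = sqrt q"
begin

lemmas H = q0 q1 ws_def xq_def
lemmas TsD = Ts_def[OF H] and T2D = T2_def[OF H] and TeD = Te_def[OF H]

lemma w2: "ws^2 = 1-2*q" and wp: "ws > 0" using s_props[OF H] by auto
lemma x2: "xq^2 = q" and xp: "xq > 0" and xl: "xq < 1" using x_props[OF H] by auto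

lemma f_Ts1: "1 \<le> Ts q ws"
proof -
  have "(1-q)^2 - ws^2 = q^2" using w2 by algebra
  hence h: "ws^2 \<le> (1-q)^2" using zero_le_power2[of q] by linarith
  have "ws \<le> 1-q" by (rule power2_le_imp_le[OF h]) (use q1 in simp)
  hence "1 \<le> (1-q)/ws" using wp by (simp add: le_divide_eq)
  hence "1 \<le> ((1-q)/ws)^2" by (rule one_le_power)
  thus ?thesis unfolding TsD .
qed

lemma f_Te1: "1 \<le> Te q"
  unfolding TeD using q0 q1 by simp

lemma f_T2Te: "T2 q ws xq \<le> Te q"
proof -
  have "(1-q)*(1-q)^2 - (ws*(1+xq))^2*q = (1+xq)^2*(q+xq-1)^2"
    using w2 x2 by algebra
  hence "(ws*(1+xq))^2*q \<le> (1-q)*(1-q)^2" by (smt (verit) zero_le_power2 mult_nonneg_nonneg)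
  hence "(ws*(1+xq))^2/(1-q)^2 \<le> (1-q)/q" using q0 q1 by (subst frac_le_iff) auto
  thus ?thesis unfolding T2D TeD by (simp add: power_divide)
qed

lemma f_R1:
  assumes c: "q + xq \<le> 1"
  shows "Ts q ws \<le> T2 q ws xq" "Ts q ws \<le> 2"
proof -
  have "ws*(1+xq)*ws - (1-q)*(1-q) = xq*(1+xq)*(1 - q - xq)" using w2 x2 by algebra
  moreover have "xq*(1+xq)*(1 - q - xq) \<ge> 0" using c xp by simp
  ultimately have "(1-q)*(1-q) \<le> ws*(1+xq)*ws" by simp
  hence "(1-q)/ws \<le> ws*(1+xq)/(1-q)" using wp q1 by (subst frac_le_iff) auto
  moreover have "0 \<le> (1-q)/ws" using wp q1 by simp
  ultimately show "Ts q ws \<le> T2 q ws xq" unfolding TsD T2D by (intro power_mono) auto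
next
  have "xq \<le> 1-q" using c by simp
  hence "xq^2 \<le> (1-q)^2" using xp by (intro power_mono) auto
  hence qq: "q \<le> (1-q)^2" using x2 by simp
  have q25: "q \<le> 2/5"
  proof (rule ccontr)
    assume "\<not> q \<le> 2/5"
    hence "(1-q)^2 < (3/5)^2" using q1 by (intro power_strict_mono) auto
    moreover have "(3/5::real)^2 = 9/25" by (simp add: power2_eq_square)
    ultimately show False using qq \<open>\<not> q \<le> 2/5\<close> by linarith
  qed
  have "q*q \<le> q*(2/5)" using q25 q0 by (intro mult_left_mono) auto
  hence "(1-q)^2 \<le> 2*ws^2" using q25 w2 by (simp add: power2_eq_square algebra_simps)
  hence "(1-q)^2/ws^2 \<le> 2" using wp by (simp add: divide_le_eq)
  thus "Ts q ws \<le> 2" unfolding TsD by (simp add: power_divide)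
qed

lemma f_R2:
  assumes c: "1 < q + xq"
  shows "Te q \<le> Ts q ws" "Te q \<le> 2"
proof -
  have "1-q < xq" using c by simp
  hence "(1-q)^2 < xq^2" using q1 by (intro power_strict_mono) auto
  hence qq: "(1-q)^2 < q" using x2 by simp
  hence "1 - 2*q \<le> (1-q)*q" by (simp add: power2_eq_square algebra_simps)
  hence A: "(1-q)*(1 - 2*q) \<le> (1-q)*((1-q)*q)" using q1 by (intro mult_left_mono) auto
  have E1: "(1-q)*ws^2 = (1-q)*(1 - 2*q)" using w2 by simp
  have E2: "(1-q)^2*q = (1-q)*((1-q)*q)" by (simp add: power2_eq_square)
  have "(1-q)*ws^2 \<le> (1-q)^2*q" using A by (simp only: E1 E2)
  hence "(1-q)/q \<le> (1-q)^2/ws^2" using q0 wp by (subst frac_le_iff) auto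
  thus "Te q \<le> Ts q ws" unfolding TeD TsD by (simp add: power_divide)
  have q3: "1/3 \<le> q"
  proof (rule ccontr)
    assume "\<not> 1/3 \<le> q"
    hence "(2/3)^2 < (1-q)^2" by (intro power_strict_mono) auto
    moreover have "(2/3::real)^2 = 4/9" by (simp add: power2_eq_square)
    ultimately show False using qq \<open>\<not> 1/3 \<le> q\<close> by linarith
  qed
  thus "Te q \<le> 2" unfolding TeD using q0 by (simp add: divide_le_eq)
qed

lemma f_T2_1:
  assumes "xq \<le> 2/3" shows "1 \<le> T2 q ws xq"
proof -
  have "(ws*(1+xq))^2 - (1-q)^2 = (1+xq)^2*xq*(2-3*xq)" using w2 x2 by algebra
  moreover have "(1+xq)^2*xq*(2-3*xq) \<ge> 0" using assms xp by simp
  ultimately have "(1-q)^2 \<le> (ws*(1+xq))^2" by simp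
  hence "1 \<le> (ws*(1+xq))^2/(1-q)^2" using q1 by simp
  thus ?thesis unfolding T2D by (simp add: power_divide)
qed

lemma f_T2_2:
  assumes "2/3 \<le> xq" shows "T2 q ws xq \<le> 1"
proof -
  have "(ws*(1+xq))^2 - (1-q)^2 = (1+xq)^2*xq*(2-3*xq)" using w2 x2 by algebra
  moreover have "(1+xq)^2*xq*(2-3*xq) \<le> 0" using assms xp by (simp add: mult_nonneg_nonpos)
  ultimately have "(ws*(1+xq))^2 \<le> (1-q)^2" by simp
  hence "(ws*(1+xq))^2/(1-q)^2 \<le> 1" using q1 by simp
  thus ?thesis unfolding T2D by (simp add: power_divide)
qed

lemma cond1: "q \<le> (3 - sqrt 5)/2 \<longleftrightarrow> q + xq \<le> 1"
proof -
  define y where "y = sqrt 5"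
  have y2: "y^2 = 5" and y1: "1 \<le> y" unfolding y_def by auto
  define c where "c = (y-1)/2"
  have c0: "0 \<le> c" unfolding c_def using y1 by simp
  have yy: "(y-1)^2 = 6 - 2*y" using y2 by (simp add: power2_eq_square algebra_simps)
  have cc: "c^2 = (3 - y)/2" unfolding c_def power_divide yy by simp
  have c1: "c^2 + c = 1"
  proof -
    have "c^2 + c = (3 - y)/2 + (y-1)/2" unfolding cc unfolding c_def ..
    also have "\<dots> = 1" by (simp add: field_simps)
    finally show ?thesis .
  qed
  have "q \<le> (3 - sqrt 5)/2 \<longleftrightarrow> q \<le> c^2" unfolding cc y_def ..
  also have "\<dots> \<longleftrightarrow> xq \<le> c"
  proof
    assume "q \<le> c^2"
    hence "sqrt q \<le> sqrt (c^2)" by (rule real_sqrt_le_mono)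
    thus "xq \<le> c" unfolding xq_def using c0 by simp
  next
    assume "xq \<le> c"
    hence "xq^2 \<le> c^2" using xp by (intro power_mono) auto
    thus "q \<le> c^2" using x2 by simp
  qed
  also have "\<dots> \<longleftrightarrow> q + xq \<le> 1"
  proof
    assume "xq \<le> c"
    hence "xq^2 \<le> c^2" using xp by (intro power_mono) auto
    thus "q + xq \<le> 1" using x2 c1 \<open>xq \<le> c\<close> by simp
  next
    assume h: "q + xq \<le> 1"
    show "xq \<le> c"
    proof (rule ccontr)
      assume "\<not> xq \<le> c"
      hence "c^2 < xq^2" using c0 by (intro power_strict_mono) auto
      thus False using h x2 c1 \<open>\<not> xq \<le> c\<close> by simp
    qed
  qed
  finally show ?thesis .
qed

lemma cond2: "q \<le> 4/9 \<longleftrightarrow> xq \<le> 2/3"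
proof -
  have e: "(4/9::real) = (2/3)^2" by (simp add: power2_eq_square)
  have s: "sqrt ((2/3::real)^2) = 2/3" by (simp only: real_sqrt_abs) 
  have "q \<le> 4/9 \<longleftrightarrow> q \<le> (2/3)^2" unfolding e ..
  also have "\<dots> \<longleftrightarrow> sqrt q \<le> sqrt ((2/3)^2)" by (rule real_sqrt_le_iff[symmetric])
  also have "\<dots> \<longleftrightarrow> xq \<le> 2/3" unfolding s xq_def ..
  finally show ?thesis .
qed

end


theorem theorem2p6:
  fixes q :: real
  assumes "0 < q" and "q < 1/2"
  shows "p3_PD q =
    (if q \<le> (3 - sqrt 5) / 2 then
       (1 / (1 - 2*q)) *
         ( - (2 * (q^3 + 3*q^2 + (4 * sqrt (1 - 2*q) - 6) * q - 2 * sqrt (1 - 2*q) + 2)) / (3*q)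
           - q^3 / (2 * (1 - q)))
     else if q \<le> 4/9 then
       (-16 * (sqrt (1 - 2*q) - 1) * (q * sqrt q) + 2 * (q^2 * sqrt q) + 15 * q^3
         + (8 * sqrt (1 - 2*q) - 25) * q^2 + q - 8 * sqrt (1 - 2*q)
         + 2 * sqrt q * (8 * sqrt (1 - 2*q) - 5) + 5)
       / (6 * (sqrt q - 1)^3 * (q * sqrt q + q))
     else (1 - 2*q)^2 / (2 * q * (1 - q)))"
proof -
  define ws where "ws = sqrt(1-2*q)"
  define xq where "xq = sqrt q"
  note H = assms ws_def xq_def
  have fold: "sqrt (1-2*q) = ws" "sqrt q = xq" by (simp_all add: ws_def xq_def)
  note TsD = Ts_def[OF H] and T2D = T2_def[OF H] and TeD = Te_def[OF H]
  have Ts1: "1 \<le> Ts q ws" by (rule f_Ts1[OF H])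
  have Te1: "1 \<le> Te q" by (rule f_Te1[OF H])
  have T2Te: "T2 q ws xq \<le> Te q" by (rule f_T2Te[OF H])
  show ?thesis
  proof (cases "q + xq \<le> 1")
    case True
    have c: "q \<le> (3 - sqrt 5)/2" using cond1[OF H] True by simp
    have R: "Ts q ws \<le> T2 q ws xq" "Ts q ws \<le> 2" using f_R1[OF H True] by auto
    have "(Lsl q has_integral ((Gf q ws (Ts q ws) - Gf q ws 1) + 0)) {1..2}"
      by (rule has_integral_combine[OF Ts1 R(2) Pa[OF H order.refl Ts1 order.refl R(1)] P0[OF H Ts1]])
        simp
    hence "p3_PD q = Gf q ws (Ts q ws) - Gf q ws 1" using p3_integral[OF assms] by simp
    also have "\<dots> = (1 / (1 - 2*q)) *
         ( - (2 * (q^3 + 3*q^2 + (4 * ws - 6) * q - 2 * ws + 2)) / (3*q)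
           - q^3 / (2 * (1 - q)))" unfolding TsD by (rule val1[OF H])
    finally show ?thesis using c unfolding fold by simp
  next
    case False
    hence F: "1 < q + xq" by simp
    have c: "\<not> q \<le> (3 - sqrt 5)/2" using cond1[OF H] False by simp
    have R: "Te q \<le> Ts q ws" "Te q \<le> 2" using f_R2[OF H F] by auto
    show ?thesis
    proof (cases "xq \<le> 2/3")
      case True
      have c2: "q \<le> 4/9" using cond2[OF H] True by simp
      have T21: "1 \<le> T2 q ws xq" by (rule f_T2_1[OF H True])
      have T2Ts: "T2 q ws xq \<le> Ts q ws" using T2Te R by simp
      have I1: "(Lsl q has_integral (Gf q ws (T2 q ws xq) - Gf q ws 1)) {1..T2 q ws xq}"
        by (rule Pa[OF H order.refl T21 T2Ts order.refl])
      have I2: "(Lsl q has_integral (Hf q (Te q) - Hf q (T2 q ws xq))) {T2 q ws xq..Te q}"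
        by (rule Pb[OF H T21 T2Te order.refl R(1) order.refl])
      have I3: "(Lsl q has_integral 0) {Te q..2}"
        by (rule P0[OF H Te1]) simp
      have I23: "(Lsl q has_integral ((Hf q (Te q) - Hf q (T2 q ws xq)) + 0)) {T2 q ws xq..2}"
        by (rule has_integral_combine[OF T2Te R(2) I2 I3])
      have "(Lsl q has_integral ((Gf q ws (T2 q ws xq) - Gf q ws 1) + ((Hf q (Te q) - Hf q (T2 q ws xq)) + 0))) {1..2}"
        by (rule has_integral_combine[OF T21 _ I1 I23]) (use T2Te R in simp)
      hence "p3_PD q = (Gf q ws (T2 q ws xq) - Gf q ws 1) + (Hf q (Te q) - Hf q (T2 q ws xq))"
        using p3_integral[OF assms] by simp
      also have "\<dots> = (-16 * (ws - 1) * (q * xq) + 2 * (q^2 * xq) + 15 * q^3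
         + (8 * ws - 25) * q^2 + q - 8 * ws
         + 2 * xq * (8 * ws - 5) + 5)
       / (6 * (xq - 1)^3 * (q * xq + q))" unfolding T2D TeD by (rule val2[OF H])
      finally show ?thesis using c c2 unfolding fold by simp
    next
      case False
      have c2: "\<not> q \<le> 4/9" using cond2[OF H] False by simp
      have T21: "T2 q ws xq \<le> 1" using f_T2_2[OF H] False by simp
      have I1: "(Lsl q has_integral (Hf q (Te q) - Hf q 1)) {1..Te q}"
        by (rule Pb[OF H order.refl Te1 T21 R(1) order.refl])
      have I3: "(Lsl q has_integral 0) {Te q..2}"
        by (rule P0[OF H Te1]) simp
      have "(Lsl q has_integral ((Hf q (Te q) - Hf q 1) + 0)) {1..2}"
        by (rule has_integral_combine[OF Te1 R(2) I1 I3])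
      hence "p3_PD q = Hf q (Te q) - Hf q 1" using p3_integral[OF assms] by simp
      also have "\<dots> = (1 - 2*q)^2 / (2 * q * (1 - q))" unfolding TeD by (rule val3[OF H])
      finally show ?thesis using c c2 unfolding fold by simp
    qed
  qed
qed


end
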